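(* In the setting described in the context, $f_{avg}(\pi^{io})\ge\mathbb{E}_{v\sim h}[f(\psi^c(v))]$.
   Context: Let $I=\{1,\dots,n\}$ be a set of items, $B$ a positive integer, $[B]=\{1,\dots,B\}$, $[0;B]=\{0,1,\dots,B\}$; for $u,w\in[0;B]^I$, $u\le w$ means coordinatewise. Let $f:[0;B]^I\to\mathbb{R}_{\ge0}$ be monotone ($u\le w\Rightarrow f(u)\le f(w)$) and lattice submodular ($f(u\vee s\mathbf{1}_i)-f(u)\ge f(w\vee s\mathbf{1}_i)-f(w)$ for all $u\le w$, $s\in[0;B]$, $i\in I$). Each item $i$ has a random state $\Phi(i)\in[B]$, independent across items, with known distribution $p_i(s)=\Pr[\Phi(i)=s]$; the state of an item is observed only after selecting it. Item $i$ in state $s$ has a nonnegative integer cost $c_i(s)$, with $c_i(s)\ge c_i(s')$ whenever $s\ge s'$. $C$ is a positive integer budget and $\mathcal{I}^{out}\subseteq 2^I$ is a downward-closed family. For $S\subseteq I$ and $\phi\in[B]^I$, $\phi_S$ equals $\phi(i)$ on $S$ and $0$ elsewhere; $\overline{f}(S)=\mathbb{E}[f(\Phi_S)]$, $F(\overline{x})=\sum_{U\subseteq I}\prod_{i\in U}\overline{x}(i)\prod_{i\notin U}(1-\overline{x}(i))\overline{f}(U)$, $P_{\mathcal{I}^{out}}=\mathrm{conv}\{\mathbf{1}_S: S\in\mathcal{I}^{out}\}$. For a policy $\pi$ (which sequentially selects items based on states observed so far), $I(\pi,\phi)$ is the set selected under realization $\phi$ and $f_{avg}(\pi)=\mathbb{E}[f(\Phi_{I(\pi,\Phi)})]$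 (expectation also over the policy's randomness). A monotone $(\beta,\gamma)$-balanced CRS for $\mathcal{I}^{out}$ is a (possibly randomized) scheme that, for any $\overline{z}\in\beta\cdot P_{\mathcal{I}^{out}}$ and the random set $R$ containing each $i$ independently with probability $\overline{z}(i)$, maps $R$ to $\chi(R)\subseteq R$ with $\chi(R)\in\mathcal{I}^{out}$, such that $\Pr[i\in\chi(R)\mid i\in R]\ge\gamma$ for all $i$, and for $i\in R\subseteq R'$, $\Pr[i\in\chi(R)]\ge\Pr[i\in\chi(R')]$. Assume such a scheme $\chi^{io}$ exists for given $\beta,\gamma\in[0,1]$. Problem P1: variables $x(i,t)\ge0$ for $i\in I$, $t\in\{1,\dots,C-c_i(B)\}$, $\overline{x}(i)=\sum_t x(i,t)$; maximize $F(\overline{x})$ subject to $\overline{x}(i)\le1$, $\overline{x}\in P_{\mathcal{I}^{out}}$, and for all $t\in\{1,\dots,C\}$: $\sum_{i\in I}\mathbb{E}[\min\{c_i(\Phi(i)),t\}]\sum_{t'=1}^{t}x(i,t')\le 2t$. Policy $\pi^{io}$: (1) compute a solution $y$ of P1 by the stochastic continuous greedy algorithm of Asadpour and Nazerzadeh (2016) with stopping time $l=\min\{\beta,1/4\}$ and step size $\delta=o(n^{-3})$; let $\overline{y}(i)=\sum_t y(i,t)$. (2) Form a random set $R^{io}$ containing each $i$ independently with probability $\overline{y}(i)$, and apply $\chi^{io}$ (with $\overline{z}=\overline{y}$) to obtain $\chi^{io}(R^{io})\in\mathcal{I}^{out}$. (3) For each $i\in\chi^{io}(R^{io})$ independently sample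 $t^{io}(i)\in\{1,\dots,C-c_i(B)\}$ with probability $y(i,t)/\overline{y}(i)$; sort $\chi^{io}(R^{io})$ in nondecreasing order of $t^{io}$ (ties broken by least index). Starting with $C'=0$, go through the items in this order: if $C'\le t^{io}(i)$, select $i$, observe $\Phi(i)$ and update $C'\leftarrow C'+c_i(\Phi(i))$; otherwise skip $i$. Distribution $h$: $v\in[0;B]^I$ has independent coordinates with $\Pr[v(i)=j]=p_i(j)\overline{y}(i)$ for $j\in[B]$ and $\Pr[v(i)=0]=1-\overline{y}(i)$; $R(v)=\{i:v(i)\ne0\}$. Mapping $\psi^a$: $\psi^a(v)(i)=v(i)$ if $i\in\chi^{io}(R(v))$, else $0$. Mapping $\psi^b$: for each $i\in R(v)$ independently sample $t(i)\in\{1,\dots,C-c_i(B)\}$ with $\Pr[t(i)=t]=y(i,t)/\overline{y}(i)$; $\psi^b(v)(i)=v(i)$ if $i\in R(v)$ and $\sum_{i'\in R(v)\setminus\{i\},\,t(i')\le t(i)}c_{i'}(v(i'))\le t(i)$, else $0$. Mapping $\psi^c$: apply $\psi^a$ and $\psi^b$ to $v$ independently and set $\psi^c(v)(i)=v(i)$ if $\psi^a(v)(i)=v(i)$ and $\psi^b(v)(i)=v(i)$, and $0$ otherwise. *)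

theory Defs
  imports "HOL-Probability.Probability"
begin

text \<open>Items are the natural numbers in I = {1..n}; a vector in [0;B]^I is a function
  nat => nat that vanishes outside I and is bounded by B on I.  State 0 means
  "not selected / absent".\<close>

definition vecs :: "nat set \<Rightarrow> nat \<Rightarrow> (nat \<Rightarrow> nat) set" where
  "vecs I B = {u. (\<forall>i\<in>I. u i \<le> B) \<and> (\<forall>i. i \<notin> I \<longrightarrow> u i = 0)}"

definition unit_vec :: "nat \<Rightarrow> nat \<Rightarrow> (nat \<Rightarrow> nat)" where
  "unit_vec s i = (\<lambda>j. if j = i then s else 0)"

definition monotone_fn :: "nat set \<Rightarrow> nat \<Rightarrow> ((nat \<Rightarrow> nat) \<Rightarrow> real) \<Rightarrow> bool" where
  "monotone_fn I B f \<longleftrightarrow> (\<forall>u\<in>vecs I B. \<forall>w\<in>vecs I B. u \<le> w \<longrightarrow> f u \<le> f w)"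

definition lattice_submodular :: "nat set \<Rightarrow> nat \<Rightarrow> ((nat \<Rightarrow> nat) \<Rightarrow> real) \<Rightarrow> bool" where
  "lattice_submodular I B f \<longleftrightarrow>
     (\<forall>u\<in>vecs I B. \<forall>w\<in>vecs I B. \<forall>s\<le>B. \<forall>i\<in>I. u \<le> w \<longrightarrow>
        f (sup u (unit_vec s i)) - f u \<ge> f (sup w (unit_vec s i)) - f w)"

definition downward_closed :: "nat set \<Rightarrow> nat set set \<Rightarrow> bool" where
  "downward_closed I F \<longleftrightarrow> F \<subseteq> Pow I \<and> (\<forall>S\<in>F. \<forall>T. T \<subseteq> S \<longrightarrow> T \<in> F)"

text \<open>z \<in> beta * P_F, with P_F = conv {1_S : S \<in> F}  (F finite, so convex hull = finite
  convex combinations).\<close>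
definition in_scaled_poly :: "real \<Rightarrow> nat set set \<Rightarrow> (nat \<Rightarrow> real) \<Rightarrow> bool" where
  "in_scaled_poly \<beta> F z \<longleftrightarrow>
     (\<exists>w. (\<forall>S\<in>F. w S \<ge> 0) \<and> sum w F = 1 \<and>
          (\<forall>i. z i = \<beta> * (\<Sum>S\<in>F. w S * indicator S i)))"

definition Rdist :: "nat set \<Rightarrow> (nat \<Rightarrow> real) \<Rightarrow> nat set pmf" where
  "Rdist I z = map_pmf (\<lambda>b. {i\<in>I. b i}) (Pi_pmf I False (\<lambda>i. bernoulli_pmf (z i)))"

text \<open>Pr[i \<in> chi(R) | i \<in> R] \<ge> gamma is written
  as Pr[i \<in> chi(R) \<and> i \<in> R] \<ge> gamma * Pr[i \<in> R] (= gamma * z i).\<close>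
definition monotone_balanced_CRS ::
  "nat set \<Rightarrow> nat set set \<Rightarrow> real \<Rightarrow> real \<Rightarrow> ((nat \<Rightarrow> real) \<Rightarrow> nat set \<Rightarrow> nat set pmf) \<Rightarrow> bool" where
  "monotone_balanced_CRS I F \<beta> \<gamma> chi \<longleftrightarrow>
     (\<forall>z. (\<forall>i. z i \<ge> 0) \<and> in_scaled_poly \<beta> F z \<longrightarrow>
        (\<forall>R. R \<subseteq> I \<longrightarrow> set_pmf (chi z R) \<subseteq> {S. S \<subseteq> R \<and> S \<in> F}) \<and>
        (\<forall>i\<in>I. measure_pmf.prob (bind_pmf (Rdist I z) (\<lambda>R. map_pmf (\<lambda>S. (R, S)) (chi z R)))
                   {(R, S). i \<in> S \<and> i \<in> R}
                 \<ge> \<gamma> * measure_pmf.prob (Rdist I z) {R. i \<in> R}) \<and>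
        (\<forall>i R R'. i \<in> R \<longrightarrow> R \<subseteq> R' \<longrightarrow> R' \<subseteq> I \<longrightarrow>
           measure_pmf.prob (chi z R) {S. i \<in> S} \<ge> measure_pmf.prob (chi z R') {S. i \<in> S}))"

definition slots :: "(nat \<Rightarrow> nat \<Rightarrow> nat) \<Rightarrow> nat \<Rightarrow> nat \<Rightarrow> nat \<Rightarrow> nat set" where
  "slots c B C i = {1..C - c i B}"

definition ybar :: "(nat \<Rightarrow> nat \<Rightarrow> real) \<Rightarrow> (nat \<Rightarrow> nat \<Rightarrow> nat) \<Rightarrow> nat \<Rightarrow> nat \<Rightarrow> nat \<Rightarrow> real" where
  "ybar y c B C i = (\<Sum>t\<in>slots c B C i. y i t)"

text \<open>Feasibility for problem P1 (the objective F is irrelevant for feasibility).\<close>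
definition P1_feasible ::
  "nat set \<Rightarrow> nat set set \<Rightarrow> (nat \<Rightarrow> nat pmf) \<Rightarrow> (nat \<Rightarrow> nat \<Rightarrow> nat) \<Rightarrow> nat \<Rightarrow> nat
    \<Rightarrow> (nat \<Rightarrow> nat \<Rightarrow> real) \<Rightarrow> bool" where
  "P1_feasible I F p c B C x \<longleftrightarrow>
     (\<forall>i t. x i t \<ge> 0) \<and>
     (\<forall>i t. (i \<notin> I \<or> t \<notin> slots c B C i) \<longrightarrow> x i t = 0) \<and>
     (\<forall>i\<in>I. ybar x c B C i \<le> 1) \<and>
     in_scaled_poly 1 F (ybar x c B C) \<and>
     (\<forall>t\<in>{1..C}. (\<Sum>i\<in>I. measure_pmf.expectation (p i) (\<lambda>s. real (min (c i s) t)) *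
                            (\<Sum>t'=1..t. x i t')) \<le> 2 * real t)"

definition tdist :: "(nat \<Rightarrow> nat \<Rightarrow> real) \<Rightarrow> (nat \<Rightarrow> nat \<Rightarrow> nat) \<Rightarrow> nat \<Rightarrow> nat \<Rightarrow> nat \<Rightarrow> nat pmf" where
  "tdist y c B C i = embed_pmf (\<lambda>t. if t \<in> slots c B C i then y i t / ybar y c B C i else 0)"

fun run_sel :: "(nat \<Rightarrow> nat \<Rightarrow> nat) \<Rightarrow> (nat \<Rightarrow> nat) \<Rightarrow> (nat \<Rightarrow> nat) \<Rightarrow> nat \<Rightarrow> nat list \<Rightarrow> nat set" where
  "run_sel c t \<phi> C' [] = {}"
| "run_sel c t \<phi> C' (i # is) =
     (if C' \<le> t i then insert i (run_sel c t \<phi> (C' + c i (\<phi> i)) is)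
      else run_sel c t \<phi> C' is)"

text \<open>The states of all items are drawn independently up front; the policy only uses
  Phi(i) after selecting i, so this gives the same distribution.
  The order: sort_key is a stable sort, applied to the list of S in increasing index
  order, so items are sorted by t with ties broken by least index.\<close>
definition policy_io ::
  "nat set \<Rightarrow> (nat \<Rightarrow> nat pmf) \<Rightarrow> (nat \<Rightarrow> nat \<Rightarrow> nat) \<Rightarrow> nat \<Rightarrow> nat
    \<Rightarrow> ((nat \<Rightarrow> real) \<Rightarrow> nat set \<Rightarrow> nat set pmf) \<Rightarrow> (nat \<Rightarrow> nat \<Rightarrow> real) \<Rightarrow> (nat \<Rightarrow> nat) pmf" where
  "policy_io I p c B C chi y =
     bind_pmf (Rdist I (ybar y c B C)) (\<lambda>R.
     bind_pmf (chi (ybar y c B C) R) (\<lambda>S.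
     bind_pmf (Pi_pmf S 0 (tdist y c B C)) (\<lambda>t.
     bind_pmf (Pi_pmf I 0 p) (\<lambda>\<phi>.
       let ord = sort_key t (sorted_list_of_set S);
           sel = run_sel c t \<phi> 0 ord
       in return_pmf (\<lambda>i. if i \<in> sel then \<phi> i else 0)))))"

definition f_avg_io ::
  "((nat \<Rightarrow> nat) \<Rightarrow> real) \<Rightarrow> nat set \<Rightarrow> (nat \<Rightarrow> nat pmf) \<Rightarrow> (nat \<Rightarrow> nat \<Rightarrow> nat) \<Rightarrow> nat \<Rightarrow> nat
    \<Rightarrow> ((nat \<Rightarrow> real) \<Rightarrow> nat set \<Rightarrow> nat set pmf) \<Rightarrow> (nat \<Rightarrow> nat \<Rightarrow> real) \<Rightarrow> real" where
  "f_avg_io f I p c B C chi y = measure_pmf.expectation (policy_io I p c B C chi y) f"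

definition h_dist :: "nat set \<Rightarrow> (nat \<Rightarrow> nat pmf) \<Rightarrow> (nat \<Rightarrow> real) \<Rightarrow> (nat \<Rightarrow> nat) pmf" where
  "h_dist I p z = Pi_pmf I 0 (\<lambda>i. bind_pmf (bernoulli_pmf (z i))
                                   (\<lambda>b. if b then p i else return_pmf 0))"

definition Rv :: "(nat \<Rightarrow> nat) \<Rightarrow> nat set" where
  "Rv v = {i. v i \<noteq> 0}"

definition psi_a :: "((nat \<Rightarrow> real) \<Rightarrow> nat set \<Rightarrow> nat set pmf) \<Rightarrow> (nat \<Rightarrow> real) \<Rightarrow> (nat \<Rightarrow> nat)
    \<Rightarrow> (nat \<Rightarrow> nat) pmf" where
  "psi_a chi z v = map_pmf (\<lambda>S i. if i \<in> S then v i else 0) (chi z (Rv v))"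

definition psi_b :: "(nat \<Rightarrow> nat \<Rightarrow> real) \<Rightarrow> (nat \<Rightarrow> nat \<Rightarrow> nat) \<Rightarrow> nat \<Rightarrow> nat \<Rightarrow> (nat \<Rightarrow> nat)
    \<Rightarrow> (nat \<Rightarrow> nat) pmf" where
  "psi_b y c B C v = map_pmf
     (\<lambda>t i. if i \<in> Rv v \<and> (\<Sum>i'\<in>{i' \<in> Rv v - {i}. t i' \<le> t i}. c i' (v i')) \<le> t i
            then v i else 0)
     (Pi_pmf (Rv v) 0 (tdist y c B C))"

definition psi_c :: "((nat \<Rightarrow> real) \<Rightarrow> nat set \<Rightarrow> nat set pmf) \<Rightarrow> (nat \<Rightarrow> nat \<Rightarrow> real)
    \<Rightarrow> (nat \<Rightarrow> nat \<Rightarrow> nat) \<Rightarrow> nat \<Rightarrow> nat \<Rightarrow> (nat \<Rightarrow> nat) \<Rightarrow> (nat \<Rightarrow> nat) pmf" where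
  "psi_c chi y c B C v =
     bind_pmf (psi_a chi (ybar y c B C) v) (\<lambda>a.
     bind_pmf (psi_b y c B C v) (\<lambda>b.
       return_pmf (\<lambda>i. if a i = v i \<and> b i = v i then v i else 0)))"

end

theory Submission
  imports Defs
begin

lemma run_sel_mem:
  "distinct xs \<Longrightarrow> sorted (map t xs) \<Longrightarrow> i \<in> set xs \<Longrightarrow>
   C0 + (\<Sum>j\<in>{j\<in>set xs. j \<noteq> i \<and> t j \<le> t i}. c j (\<phi> j)) \<le> t i \<Longrightarrow>
   i \<in> run_sel c t \<phi> C0 xs"
proof (induction xs arbitrary: C0)
  case Nil then show ?case by simp
next
  case (Cons a xs)
  show ?case
  proof (cases "a = i")
    case True
    then show ?thesis using Cons.prems by auto
  next
    case False
    have ia: "i \<in> set xs" using Cons.prems False by auto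
    have ta: "t a \<le> t i" using Cons.prems(2) ia by auto
    have eq: "{j\<in>set (a#xs). j \<noteq> i \<and> t j \<le> t i} = insert a {j\<in>set xs. j \<noteq> i \<and> t j \<le> t i}"
      using False ta by auto
    have an: "a \<notin> {j\<in>set xs. j \<noteq> i \<and> t j \<le> t i}" using Cons.prems(1) by auto
    have s: "(\<Sum>j\<in>{j\<in>set (a#xs). j \<noteq> i \<and> t j \<le> t i}. c j (\<phi> j)) =
             c a (\<phi> a) + (\<Sum>j\<in>{j\<in>set xs. j \<noteq> i \<and> t j \<le> t i}. c j (\<phi> j))"
      unfolding eq by (subst sum.insert[OF _ an]) auto
    show ?thesis
    proof (cases "C0 \<le> t a")
      case True
      have "i \<in> run_sel c t \<phi> (C0 + c a (\<phi> a)) xs"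
        using Cons.IH[of "C0 + c a (\<phi> a)"] Cons.prems s ia by auto
      then show ?thesis using True by simp
    next
      case F: False
      have "i \<in> run_sel c t \<phi> C0 xs"
        using Cons.IH[of "C0"] Cons.prems s ia by auto
      then show ?thesis using F by simp
    qed
  qed
qed


lemma run_sel_sub: "run_sel c t \<phi> C0 xs \<subseteq> set xs"
  by (induction xs arbitrary: C0) auto

lemma h_decomp:
  assumes "finite I"
  shows "h_dist I p z = bind_pmf (Pi_pmf I False (\<lambda>i. bernoulli_pmf (z i)))
     (\<lambda>bf. bind_pmf (Pi_pmf I 0 p) (\<lambda>\<phi>. return_pmf (\<lambda>i. if i \<in> I \<and> bf i then \<phi> i else 0)))"
proof -
  have "h_dist I p z = bind_pmf (Pi_pmf I False (\<lambda>i. bernoulli_pmf (z i)))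
     (\<lambda>bf. Pi_pmf I 0 (\<lambda>i. if bf i then p i else return_pmf 0))"
    unfolding h_dist_def by (rule Pi_pmf_bind[OF assms])
  also have "\<dots> = bind_pmf (Pi_pmf I False (\<lambda>i. bernoulli_pmf (z i)))
     (\<lambda>bf. Pi_pmf I 0 (\<lambda>i. bind_pmf (p i) (\<lambda>s. return_pmf (if bf i then s else 0))))"
    by (intro bind_pmf_cong refl Pi_pmf_cong) (auto simp: bind_return_pmf')
  also have "\<dots> = bind_pmf (Pi_pmf I False (\<lambda>i. bernoulli_pmf (z i)))
     (\<lambda>bf. bind_pmf (Pi_pmf I 0 p) (\<lambda>\<phi>. Pi_pmf I 0 (\<lambda>i. return_pmf (if bf i then \<phi> i else 0))))"
    by (intro bind_pmf_cong refl Pi_pmf_bind[OF assms])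
  also have "\<dots> = bind_pmf (Pi_pmf I False (\<lambda>i. bernoulli_pmf (z i)))
     (\<lambda>bf. bind_pmf (Pi_pmf I 0 p) (\<lambda>\<phi>. return_pmf (\<lambda>i. if i \<in> I \<and> bf i then \<phi> i else 0)))"
    using assms by (intro bind_pmf_cong refl) (auto intro!: arg_cong[of _ _ return_pmf])
  finally show ?thesis .
qed

theorem lemma7:
  fixes n B C :: nat
    and f :: "(nat \<Rightarrow> nat) \<Rightarrow> real"
    and p :: "nat \<Rightarrow> nat pmf"
    and c :: "nat \<Rightarrow> nat \<Rightarrow> nat"
    and Iout :: "nat set set"
    and \<beta> \<gamma> :: real
    and chi :: "(nat \<Rightarrow> real) \<Rightarrow> nat set \<Rightarrow> nat set pmf"
    and y :: "nat \<Rightarrow> nat \<Rightarrow> real"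
  assumes B_pos: "B > 0" and C_pos: "C > 0"
    and f_nonneg: "\<forall>u\<in>vecs {1..n} B. f u \<ge> 0"
    and f_mono: "monotone_fn {1..n} B f"
    and f_subm: "lattice_submodular {1..n} B f"
    and p_states: "\<forall>i\<in>{1..n}. set_pmf (p i) \<subseteq> {1..B}"
    and c_mono: "\<forall>i\<in>{1..n}. \<forall>s\<in>{1..B}. \<forall>s'\<in>{1..B}. s' \<le> s \<longrightarrow> c i s' \<le> c i s"
    and Iout_dc: "downward_closed {1..n} Iout"
    and \<beta>_range: "0 \<le> \<beta>" "\<beta> \<le> 1" and \<gamma>_range: "0 \<le> \<gamma>" "\<gamma> \<le> 1"
    and CRS: "monotone_balanced_CRS {1..n} Iout \<beta> \<gamma> chi"
    and y_P1: "P1_feasible {1..n} Iout p c B C y"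
    and y_scaled: "in_scaled_poly \<beta> Iout (ybar y c B C)"
  shows "f_avg_io f {1..n} p c B C chi y \<ge>
         measure_pmf.expectation
           (bind_pmf (h_dist {1..n} p (ybar y c B C)) (psi_c chi y c B C)) f"
  
proof -
  define I where "I = {1..n}"
  define z where "z = ybar y c B C"
  define T where "T = tdist y c B C"
  define B0 where "B0 = Pi_pmf I False (\<lambda>i. bernoulli_pmf (z i))"
  define P0 where "P0 = Pi_pmf I 0 p"
  define Rb where "Rb = (\<lambda>bf. {i\<in>I. bf i})"
  define vv where "vv = (\<lambda>bf (\<phi>::nat\<Rightarrow>nat) i. if i \<in> I \<and> bf i then \<phi> i else 0)"
  define G1 where "G1 = (\<lambda>(\<phi>::nat\<Rightarrow>nat) S (t::nat\<Rightarrow>nat).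
     let t' = (\<lambda>x. if x \<in> S then t x else 0) in
     (\<lambda>i. if i \<in> run_sel c t' \<phi> 0 (sort_key t' (sorted_list_of_set S)) then \<phi> i else 0))"
  define G0 where "G0 = (\<lambda>(\<phi>::nat\<Rightarrow>nat) S (t::nat\<Rightarrow>nat).
     (\<lambda>i. if i \<in> run_sel c t \<phi> 0 (sort_key t (sorted_list_of_set S)) then \<phi> i else 0))"
  define G2 where "G2 = (\<lambda>bf \<phi> S (t::nat\<Rightarrow>nat). let v = vv bf \<phi> in
     (\<lambda>i. if (if i \<in> S then v i else 0) = v i \<and>
            (if i \<in> Rv v \<and> (\<Sum>i'\<in>{i' \<in> Rv v - {i}. t i' \<le> t i}. c i' (v i')) \<le> t i
             then v i else 0) = v i then v i else 0))"
  define \<Omega> where "\<Omega> = bind_pmf B0 (\<lambda>bf. bind_pmf P0 (\<lambda>\<phi>. bind_pmf (chi z (Rb bf)) (\<lambda>S.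
     bind_pmf (Pi_pmf (Rb bf) 0 T) (\<lambda>t. return_pmf (bf, \<phi>, S, t)))))"
  have finI: "finite I" unfolding I_def by simp
  have z_nonneg: "\<forall>i. z i \<ge> 0"
    using y_P1 unfolding z_def ybar_def P1_feasible_def by (auto intro: sum_nonneg)
  have crs: "\<And>R. R \<subseteq> I \<Longrightarrow> set_pmf (chi z R) \<subseteq> {S. S \<subseteq> R \<and> S \<in> Iout}"
    using CRS z_nonneg y_scaled unfolding monotone_balanced_CRS_def z_def I_def by blast
  have B0_set: "\<And>bf x. bf \<in> set_pmf B0 \<Longrightarrow> x \<notin> I \<Longrightarrow> bf x = False"
    using set_Pi_pmf_subset[OF finI, of False "\<lambda>i. bernoulli_pmf (z i)"] unfolding B0_def by blast
  have P0_set: "\<And>\<phi> x. \<phi> \<in> set_pmf P0 \<Longrightarrow> (x \<notin> I \<longrightarrow> \<phi> x = 0) \<and> (x \<in> I \<longrightarrow> \<phi> x \<in> {1..B})"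
    using set_Pi_pmf[OF finI, of 0 p] p_states unfolding P0_def I_def PiE_dflt_def by fastforce
  have Rb_sub: "\<And>bf. Rb bf \<subseteq> I" unfolding Rb_def by auto
  have finRb: "\<And>bf. finite (Rb bf)" using Rb_sub finI finite_subset by blast

  have LHS: "policy_io {1..n} p c B C chi y = map_pmf (\<lambda>(bf, \<phi>, S, t). G1 \<phi> S t) \<Omega>"
  proof -
    have "policy_io {1..n} p c B C chi y = bind_pmf B0 (\<lambda>bf. bind_pmf (chi z (Rb bf)) (\<lambda>S.
       bind_pmf (Pi_pmf S 0 T) (\<lambda>t. bind_pmf P0 (\<lambda>\<phi>. return_pmf (G0 \<phi> S t)))))"
      unfolding policy_io_def Rdist_def bind_map_pmf B0_def P0_def Rb_def G0_def I_def z_def T_def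
      by (intro bind_pmf_cong refl) (simp add: Let_def)
    also have "\<dots> = bind_pmf B0 (\<lambda>bf. bind_pmf (chi z (Rb bf)) (\<lambda>S.
       bind_pmf (Pi_pmf (Rb bf) 0 T) (\<lambda>t. bind_pmf P0 (\<lambda>\<phi>. return_pmf (G1 \<phi> S t)))))"
    proof (rule bind_pmf_cong[OF refl], rule bind_pmf_cong[OF refl])
      fix bf S assume "S \<in> set_pmf (chi z (Rb bf))"
      then have SR: "S \<subseteq> Rb bf" using crs[OF Rb_sub] by blast
      have "Pi_pmf S 0 T = map_pmf (\<lambda>f x. if x \<in> S then f x else 0) (Pi_pmf (Rb bf) 0 T)"
        by (rule Pi_pmf_subset[OF finRb SR])
      then show "bind_pmf (Pi_pmf S 0 T) (\<lambda>t. bind_pmf P0 (\<lambda>\<phi>. return_pmf (G0 \<phi> S t))) =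
          bind_pmf (Pi_pmf (Rb bf) 0 T) (\<lambda>t. bind_pmf P0 (\<lambda>\<phi>. return_pmf (G1 \<phi> S t)))"
        unfolding G1_def G0_def Let_def by (simp add: bind_map_pmf)
    qed
    also have "\<dots> = bind_pmf B0 (\<lambda>bf. bind_pmf P0 (\<lambda>\<phi>. bind_pmf (chi z (Rb bf)) (\<lambda>S.
       bind_pmf (Pi_pmf (Rb bf) 0 T) (\<lambda>t. return_pmf (G1 \<phi> S t)))))"
    proof (intro bind_pmf_cong refl)
      fix bf
      have "bind_pmf (chi z (Rb bf)) (\<lambda>S.
       bind_pmf (Pi_pmf (Rb bf) 0 T) (\<lambda>t. bind_pmf P0 (\<lambda>\<phi>. return_pmf (G1 \<phi> S t))))
       = bind_pmf (chi z (Rb bf)) (\<lambda>S. bind_pmf P0 (\<lambda>\<phi>. 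
       bind_pmf (Pi_pmf (Rb bf) 0 T) (\<lambda>t. return_pmf (G1 \<phi> S t))))"
        by (intro bind_pmf_cong refl bind_commute_pmf)
      also have "\<dots> = bind_pmf P0 (\<lambda>\<phi>. bind_pmf (chi z (Rb bf)) (\<lambda>S.
       bind_pmf (Pi_pmf (Rb bf) 0 T) (\<lambda>t. return_pmf (G1 \<phi> S t))))"
        by (rule bind_commute_pmf)
      finally show "bind_pmf (chi z (Rb bf)) (\<lambda>S.
       bind_pmf (Pi_pmf (Rb bf) 0 T) (\<lambda>t. bind_pmf P0 (\<lambda>\<phi>. return_pmf (G1 \<phi> S t))))
       = bind_pmf P0 (\<lambda>\<phi>. bind_pmf (chi z (Rb bf)) (\<lambda>S.
       bind_pmf (Pi_pmf (Rb bf) 0 T) (\<lambda>t. return_pmf (G1 \<phi> S t))))" .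
    qed
    also have "\<dots> = map_pmf (\<lambda>(bf, \<phi>, S, t). G1 \<phi> S t) \<Omega>"
      unfolding \<Omega>_def map_pmf_def bind_assoc_pmf bind_return_pmf by simp
    finally show ?thesis .
  qed
  have RHS: "bind_pmf (h_dist {1..n} p (ybar y c B C)) (psi_c chi y c B C)
      = map_pmf (\<lambda>(bf, \<phi>, S, t). G2 bf \<phi> S t) \<Omega>"
  proof -
    have "bind_pmf (h_dist {1..n} p (ybar y c B C)) (psi_c chi y c B C)
      = bind_pmf B0 (\<lambda>bf. bind_pmf P0 (\<lambda>\<phi>. psi_c chi y c B C (vv bf \<phi>)))"
      unfolding h_decomp[OF finI[unfolded I_def]] bind_assoc_pmf bind_return_pmf
        B0_def P0_def vv_def I_def z_def ..
    also have "\<dots> = bind_pmf B0 (\<lambda>bf. bind_pmf P0 (\<lambda>\<phi>. bind_pmf (chi z (Rb bf)) (\<lambda>S.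
       bind_pmf (Pi_pmf (Rb bf) 0 T) (\<lambda>t. return_pmf (G2 bf \<phi> S t)))))"
    proof (rule bind_pmf_cong[OF refl], rule bind_pmf_cong[OF refl])
      fix bf \<phi> assume ph: "\<phi> \<in> set_pmf P0"
      have RvR: "Rv (vv bf \<phi>) = Rb bf"
        using P0_set[OF ph] unfolding Rv_def vv_def Rb_def by force
      show "psi_c chi y c B C (vv bf \<phi>) = bind_pmf (chi z (Rb bf)) (\<lambda>S.
       bind_pmf (Pi_pmf (Rb bf) 0 T) (\<lambda>t. return_pmf (G2 bf \<phi> S t)))"
        unfolding psi_c_def psi_a_def psi_b_def G2_def Let_def bind_map_pmf RvR z_def T_def ..
    qed
    also have "\<dots> = map_pmf (\<lambda>(bf, \<phi>, S, t). G2 bf \<phi> S t) \<Omega>"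
      unfolding \<Omega>_def map_pmf_def bind_assoc_pmf bind_return_pmf by simp
    finally show ?thesis .
  qed
  have key: "G1 \<phi> S t \<in> vecs I B \<and> G2 bf \<phi> S t \<in> vecs I B \<and> G2 bf \<phi> S t \<le> G1 \<phi> S t"
    if bf: "bf \<in> set_pmf B0" and ph: "\<phi> \<in> set_pmf P0" and S: "S \<in> set_pmf (chi z (Rb bf))"
    for bf \<phi> S t
  proof -
    have SR: "S \<subseteq> Rb bf" using crs[OF Rb_sub] S by blast
    have finS: "finite S" using SR finRb finite_subset by blast
    have RvR: "Rv (vv bf \<phi>) = Rb bf"
      using P0_set[OF ph] unfolding Rv_def vv_def Rb_def by force
    define t' where "t' = (\<lambda>x. if x \<in> S then t x else 0)"
    define xs where "xs = sort_key t' (sorted_list_of_set S)"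
    have xs_set: "set xs = S" unfolding xs_def using finS by simp
    have xs_dist: "distinct xs" unfolding xs_def using finS by simp
    have xs_sorted: "sorted (map t' xs)" unfolding xs_def by simp
    have G1e: "G1 \<phi> S t = (\<lambda>i. if i \<in> run_sel c t' \<phi> 0 xs then \<phi> i else 0)"
      unfolding G1_def t'_def xs_def Let_def by simp
    have G2e: "G2 bf \<phi> S t = (\<lambda>i. if (if i \<in> S then vv bf \<phi> i else 0) = vv bf \<phi> i \<and>
            (if i \<in> Rb bf \<and> (\<Sum>i'\<in>{i' \<in> Rb bf - {i}. t i' \<le> t i}. c i' (vv bf \<phi> i')) \<le> t i
             then vv bf \<phi> i else 0) = vv bf \<phi> i then vv bf \<phi> i else 0)"
      unfolding G2_def Let_def RvR by simp
    have v1: "G1 \<phi> S t \<in> vecs I B"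
      unfolding vecs_def G1e using run_sel_sub[of c t' \<phi> 0 xs] xs_set SR Rb_sub P0_set[OF ph]
      by fastforce
    have v2: "G2 bf \<phi> S t \<in> vecs I B"
      unfolding vecs_def G2e using P0_set[OF ph] unfolding vv_def by auto
    have le: "G2 bf \<phi> S t i \<le> G1 \<phi> S t i" for i
    proof (cases "G2 bf \<phi> S t i = 0")
      case True then show ?thesis by simp
    next
      case False
      then have nz: "vv bf \<phi> i \<noteq> 0" unfolding G2e by (auto split: if_splits)
      have iS: "i \<in> S" using False nz unfolding G2e by (auto split: if_splits)
      have sumc: "(\<Sum>i'\<in>{i' \<in> Rb bf - {i}. t i' \<le> t i}. c i' (vv bf \<phi> i')) \<le> t i"
        using False nz unfolding G2e by (auto split: if_splits)
      have G2i: "G2 bf \<phi> S t i = \<phi> i" using False nz unfolding G2e vv_def by (auto split: if_splits)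
      have "(\<Sum>j\<in>{j\<in>set xs. j \<noteq> i \<and> t' j \<le> t' i}. c j (\<phi> j))
            = (\<Sum>j\<in>{j\<in>S. j \<noteq> i \<and> t j \<le> t i}. c j (vv bf \<phi> j))"
        unfolding xs_set t'_def using iS SR unfolding vv_def Rb_def
        by (intro sum.cong) auto
      also have "\<dots> \<le> (\<Sum>i'\<in>{i' \<in> Rb bf - {i}. t i' \<le> t i}. c i' (vv bf \<phi> i'))"
        using SR finRb[of bf] by (intro sum_mono2) auto
      finally have "0 + (\<Sum>j\<in>{j\<in>set xs. j \<noteq> i \<and> t' j \<le> t' i}. c j (\<phi> j)) \<le> t' i"
        using sumc iS unfolding t'_def by simp
      then have "i \<in> run_sel c t' \<phi> 0 xs"
        using run_sel_mem[OF xs_dist xs_sorted] iS xs_set by blast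
      then show ?thesis using G2i unfolding G1e by simp
    qed
    show ?thesis using v1 v2 le by (simp add: le_fun_def)
  qed
  have pw: "(case \<omega> of (bf, \<phi>, S, t) \<Rightarrow> G1 \<phi> S t) \<in> vecs I B \<and>
            (case \<omega> of (bf, \<phi>, S, t) \<Rightarrow> G2 bf \<phi> S t) \<in> vecs I B \<and>
            (case \<omega> of (bf, \<phi>, S, t) \<Rightarrow> G2 bf \<phi> S t) \<le> (case \<omega> of (bf, \<phi>, S, t) \<Rightarrow> G1 \<phi> S t)"
    if "\<omega> \<in> set_pmf \<Omega>" for \<omega>
    using that key unfolding \<Omega>_def by (auto simp: set_bind_pmf)
  have finV: "finite (vecs I B)"
  proof -
    have "vecs I B = PiE_dflt I 0 (\<lambda>_. {..B})" unfolding vecs_def PiE_dflt_def by auto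
    then show ?thesis using finI by auto
  qed
  define M where "M = Max ((\<lambda>u. \<bar>f u\<bar>) ` vecs I B)"
  have bnd: "\<And>u. u \<in> vecs I B \<Longrightarrow> norm (f u) \<le> M"
    unfolding M_def using finV by (auto intro: Max_ge)
  have int1: "integrable \<Omega> (\<lambda>\<omega>. f (case \<omega> of (bf, \<phi>, S, t) \<Rightarrow> G1 \<phi> S t))"
    by (rule measure_pmf.integrable_const_bound[where B=M]) (use pw bnd in \<open>auto intro!: AE_pmfI\<close>)
  have int2: "integrable \<Omega> (\<lambda>\<omega>. f (case \<omega> of (bf, \<phi>, S, t) \<Rightarrow> G2 bf \<phi> S t))"
    by (rule measure_pmf.integrable_const_bound[where B=M]) (use pw bnd in \<open>auto intro!: AE_pmfI\<close>)
  have "measure_pmf.expectation \<Omega> (\<lambda>\<omega>. f (case \<omega> of (bf, \<phi>, S, t) \<Rightarrow> G2 bf \<phi> S t))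
     \<le> measure_pmf.expectation \<Omega> (\<lambda>\<omega>. f (case \<omega> of (bf, \<phi>, S, t) \<Rightarrow> G1 \<phi> S t))"
    using int1 int2 pw f_mono unfolding monotone_fn_def I_def
    by (intro integral_mono_AE AE_pmfI) auto
  then show ?thesis unfolding f_avg_io_def LHS RHS by simp
qed

end
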